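(* Let $n\ge1$. The Chabauty space $\mathcal{C}(\mathbf{Z}\times\mathbf{Z}/n\mathbf{Z})$ is homeomorphic to $\overline{\mathbf{N}}\times[d(n)]$, the accumulation points corresponding to the subgroups $\{0\}\times\langle m\rangle$, with $m$ a positive divisor of $n$.
   Context: For a discrete group $G$, $\mathcal{C}(G)$ is the set of subgroups of $G$ with the Chabauty topology (the topology induced by the product topology on $\{0,1\}^G$). $\overline{\mathbf{N}}=\mathbf{N}\cup\{\infty\}$ is the one-point compactification of $\mathbf{N}$, $[k]=\{1,\dots,k\}$ (discrete), $d(n)$ is the number of positive divisors of $n$, and $\langle m\rangle$ is the subgroup of $\mathbf{Z}/n\mathbf{Z}$ generated by the class of $m$. *)

theory Defs
  imports "HOL-Analysis.Analysis" "HOL-Algebra.Algebra" "HOL-Library.Extended_Real"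
begin

definition chabauty_topology :: "('a, 'b) monoid_scheme \<Rightarrow> 'a set topology" where
  "chabauty_topology G =
     pullback_topology {H. subgroup H G} (\<lambda>H. \<lambda>g\<in>carrier G. g \<in> H)
       (product_topology (\<lambda>_. discrete_topology (UNIV :: bool set)) (carrier G))"

definition Z_times_Zn :: "nat \<Rightarrow> (int \<times> int) monoid" where
  "Z_times_Zn n = integer_group \<times>\<times> integer_mod_group n"

definition num_divisors :: "nat \<Rightarrow> nat" where
  "num_divisors n = card {m. m dvd n}"

end

theory Submission
  imports Defs
begin


lemma G_group: "group (Z_times_Zn n)"
  unfolding Z_times_Zn_def by (intro DirProd_group) auto

lemma G_carrier: "n \<ge> 1 \<Longrightarrow> carrier (Z_times_Zn n) = UNIV \<times> {0..<int n}"
  by (simp add: Z_times_Zn_def carrier_integer_mod_group)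

lemma G_mult: "(x1,y1) \<otimes>\<^bsub>Z_times_Zn n\<^esub> (x2,y2) = (x1+x2, (y1+y2) mod int n)"
  by (simp add: Z_times_Zn_def)

lemma G_one: "\<one>\<^bsub>Z_times_Zn n\<^esub> = (0,0)"
  by (simp add: Z_times_Zn_def)

lemma G_inv: "n \<ge> 1 \<Longrightarrow> b \<in> {0..<int n} \<Longrightarrow> inv\<^bsub>Z_times_Zn n\<^esub> (a,b) = (-a, (-b) mod int n)"
  unfolding Z_times_Zn_def
  by (subst inv_DirProd) (auto simp: carrier_integer_mod_group)

definition Hs :: "int \<Rightarrow> int \<Rightarrow> int \<Rightarrow> int \<Rightarrow> (int \<times> int) set" where
  "Hs N m d a = {(x,y). 0 \<le> y \<and> y < N \<and> (if d = 0 then x = 0 \<and> m dvd y else d dvd x \<and> m dvd (y - (x div d) * a))}"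

lemma Hs_mem: "(x,y) \<in> Hs N m d a \<longleftrightarrow> 0 \<le> y \<and> y < N \<and> (if d = 0 then x = 0 \<and> m dvd y else d dvd x \<and> m dvd (y - (x div d) * a))"
  by (simp add: Hs_def)

lemma dvd_mod_shift: "(m::int) dvd N \<Longrightarrow> m dvd (A mod N - B) \<longleftrightarrow> m dvd (A - B)"
proof -
  assume "m dvd N"
  have "A mod N - B = (A - B) - N * (A div N)" by (simp add: minus_div_mult_eq_mod[symmetric] algebra_simps)
  then show ?thesis using \<open>m dvd N\<close> by (metis dvd_diff dvd_mult2 diff_add_cancel dvd_add)
qed

lemma Hs_subgroup:
  assumes n: "n \<ge> 1" and m: "m > 0" "m dvd int n" and d: "d \<ge> 0"
  shows "subgroup (Hs (int n) m d a) (Z_times_Zn n)"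
proof (rule group.subgroupI[OF G_group])
  show "Hs (int n) m d a \<subseteq> carrier (Z_times_Zn n)" using n by (auto simp: G_carrier Hs_def)
  show "Hs (int n) m d a \<noteq> {}" using n by (auto simp: Hs_def intro!: exI[of _ 0])
next
  fix p assume p: "p \<in> Hs (int n) m d a"
  obtain x y where xy: "p = (x,y)" by force
  have y: "y \<in> {0..<int n}" using p xy by (auto simp: Hs_def)
  show "inv\<^bsub>Z_times_Zn n\<^esub> p \<in> Hs (int n) m d a"
  proof (cases "d = 0")
    case True
    then show ?thesis using p xy y n m by (auto simp: G_inv Hs_def dvd_mod_shift dvd_mod_iff)
  next
    case False
    then obtain k where k: "x = d * k" using p xy by (auto simp: Hs_def)
    have "m dvd (y - k * a)" using p xy k False by (auto simp: Hs_def)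
    then have "m dvd (- y - (- (d * k)) div d * a)"
      using False by (metis dvd_minus_iff minus_diff_eq mult_minus_right nonzero_mult_div_cancel_left mult_minus_left diff_minus_eq_add uminus_add_conv_diff)
    then show ?thesis using p xy y n m False k by (auto simp: G_inv Hs_def dvd_mod_shift)
  qed
next
  fix p q assume p: "p \<in> Hs (int n) m d a" and q: "q \<in> Hs (int n) m d a"
  obtain x y where xy: "p = (x,y)" by force
  obtain x' y' where xy': "q = (x',y')" by force
  show "p \<otimes>\<^bsub>Z_times_Zn n\<^esub> q \<in> Hs (int n) m d a"
  proof (cases "d = 0")
    case True
    then show ?thesis using p q xy xy' n m by (auto simp: G_mult Hs_def dvd_mod_shift dvd_mod_iff)
  next
    case False
    then obtain k where k: "x = d * k" using p xy by (auto simp: Hs_def)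
    obtain k' where k': "x' = d * k'" using q xy' False by (auto simp: Hs_def)
    have "m dvd (y - k * a)" using p xy k False by (auto simp: Hs_def)
    moreover have "m dvd (y' - k' * a)" using q xy' k' False by (auto simp: Hs_def)
    ultimately have "m dvd (y + y' - (k + k') * a)" by (metis dvd_add add_diff_add distrib_right)
    moreover have "(d * k + d * k') div d = k + k'" using False by (simp add: distrib_left[symmetric])
    ultimately show ?thesis using p q xy xy' n m False k k' by (auto simp: G_mult Hs_def dvd_mod_shift dvd_mod_iff)
  qed
qed



lemma pair_multiples:
  fixes L :: "(int \<times> int) set"
  assumes z: "(0,0) \<in> L" and add: "\<And>p1 q1 p2 q2. (p1,q1) \<in> L \<Longrightarrow> (p2,q2) \<in> L \<Longrightarrow> (p1+p2, q1+q2) \<in> L"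
    and neg: "\<And>a b. (a,b) \<in> L \<Longrightarrow> (-a, -b) \<in> L" and v: "(a,b) \<in> L"
  shows "(k*a, k*b) \<in> L"
proof -
  have nat: "(int j * a, int j * b) \<in> L" for j :: nat
    by (induction j) (use z add v in \<open>auto simp: distrib_right\<close>)
  show ?thesis
  proof (cases "k \<ge> 0")
    case True then show ?thesis using nat[of "nat k"] by simp
  next
    case False then show ?thesis using neg[OF nat[of "nat (-k)"]] by simp
  qed
qed

lemma int_subgroup:
  fixes S :: "int set"
  assumes z: "0 \<in> S" and add: "\<And>x y. x \<in> S \<Longrightarrow> y \<in> S \<Longrightarrow> x + y \<in> S"
    and neg: "\<And>x. x \<in> S \<Longrightarrow> -x \<in> S"
  shows "\<exists>g\<ge>0. S = {x. g dvd x}"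
proof -
  let ?L = "{(x,y::int). x \<in> S}"
  have mult: "g \<in> S \<Longrightarrow> k * g \<in> S" for g k
    using pair_multiples[of ?L g 0 k] z add neg by auto
  show ?thesis
  proof (cases "S = {0}")
    case True then show ?thesis by (intro exI[of _ 0]) auto
  next
    case False
    then obtain x where x: "x \<in> S" "x \<noteq> 0" using z by auto
    have "\<exists>j::nat. j > 0 \<and> int j \<in> S"
    proof (cases "x > 0")
      case True then show ?thesis using x by (intro exI[of _ "nat x"]) auto
    next
      case False then show ?thesis using x neg[OF x(1)] by (intro exI[of _ "nat (-x)"]) auto
    qed
    define j where "j = (LEAST j::nat. j > 0 \<and> int j \<in> S)"
    have j: "j > 0" "int j \<in> S" using LeastI_ex[OF \<open>\<exists>j::nat. j > 0 \<and> int j \<in> S\<close>] unfolding j_def by auto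
    have jmin: "i > 0 \<Longrightarrow> int i \<in> S \<Longrightarrow> j \<le> i" for i unfolding j_def by (rule Least_le) auto
    have "S = {x. int j dvd x}"
    proof safe
      fix y assume y: "y \<in> S"
      have r: "y mod int j \<in> S"
      proof -
        have "y mod int j = y + (- (y div int j)) * int j" by (simp add: minus_div_mult_eq_mod[symmetric])
        moreover have "y + (- (y div int j)) * int j \<in> S" using add[OF y mult[OF j(2), of "- (y div int j)"]] .
        ultimately show ?thesis by simp
      qed
      show "int j dvd y"
      proof (rule ccontr)
        assume "\<not> int j dvd y"
        then have "y mod int j > 0" using j(1) by (simp add: dvd_eq_mod_eq_0 order_le_neq_trans pos_mod_sign)
        moreover have "y mod int j < int j" using j(1) by simp
        ultimately show False using jmin[of "nat (y mod int j)"] r by auto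
      qed
    next
      fix y assume "int j dvd y"
      then obtain k where "y = int j * k" by auto
      then show "y \<in> S" using mult[OF j(2), of k] by (simp add: mult.commute)
    qed
    then show ?thesis by (intro exI[of _ "int j"]) auto
  qed
qed



lemma classify:
  assumes n: "n \<ge> 1" and H: "subgroup H (Z_times_Zn n)"
  shows "\<exists>m d a. m > 0 \<and> m dvd int n \<and> d \<ge> 0 \<and> 0 \<le> a \<and> a < m \<and> (d = 0 \<longrightarrow> a = 0) \<and> H = Hs (int n) m d a"
proof -
  define N where "N = int n"
  have Npos: "N > 0" using n by (simp add: N_def)
  have Hsub: "H \<subseteq> UNIV \<times> {0..<N}" using subgroup.subset[OF H] n by (simp add: G_carrier N_def)
  have hmul: "(x1+x2, (y1+y2) mod N) \<in> H" if "(x1,y1) \<in> H" "(x2,y2) \<in> H" for x1 y1 x2 y2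
    using subgroup.m_closed[OF H that] by (simp add: G_mult N_def)
  have hinv: "(-x, (-y) mod N) \<in> H" if "(x,y) \<in> H" for x y
  proof -
    have "y \<in> {0..<int n}" using that Hsub by (auto simp: N_def)
    then show ?thesis using subgroup.m_inv_closed[OF H that] n by (simp add: G_inv N_def)
  qed
  have h0: "(0,0) \<in> H" using subgroup.one_closed[OF H] by (simp add: G_one)
  define L where "L = {(x,y). (x, y mod N) \<in> H}"
  have L0: "(0,0) \<in> L" using h0 by (simp add: L_def)
  have Ladd: "(x1+x2, y1+y2) \<in> L" if "(x1,y1) \<in> L" "(x2,y2) \<in> L" for x1 y1 x2 y2
    using hmul[OF that[unfolded L_def, simplified]] by (simp add: L_def mod_add_eq)
  have Lneg: "(-x, -y) \<in> L" if "(x,y) \<in> L" for x y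
    using hinv[OF that[unfolded L_def, simplified]] by (simp add: L_def mod_minus_eq)
  have Lmult: "(k*x, k*y) \<in> L" if "(x,y) \<in> L" for k x y
    using pair_multiples[of L x y k] L0 Ladd Lneg that by blast
  have memH: "(x,y) \<in> H \<longleftrightarrow> 0 \<le> y \<and> y < N \<and> (x,y) \<in> L" for x y
    using Hsub by (auto simp: L_def)
  define K where "K = {y. (0,y) \<in> L}"
  obtain m where m: "m \<ge> 0" "K = {y. m dvd y}"
    using int_subgroup[of K] L0 Ladd[of 0 _ 0] Lneg[of 0] unfolding K_def by force
  have "N \<in> K" using h0 by (simp add: K_def L_def)
  then have mN: "m dvd N" using m by auto
  then have mpos: "m > 0" using m Npos by (cases "m = 0") auto
  define P where "P = {x. \<exists>y. (x,y) \<in> L}"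
  obtain d where d: "d \<ge> 0" "P = {x. d dvd x}"
  proof -
    have "\<exists>g\<ge>0. P = {x. g dvd x}"
    proof (rule int_subgroup)
      show "0 \<in> P" using L0 by (auto simp: P_def)
      show "x + y \<in> P" if "x \<in> P" "y \<in> P" for x y using that Ladd by (force simp: P_def)
      show "-x \<in> P" if "x \<in> P" for x using that Lneg by (force simp: P_def)
    qed
    then show ?thesis using that by blast
  qed
  show ?thesis
  proof (cases "d = 0")
    case True
    have "H = Hs N m 0 0"
    proof safe
      fix x y assume xy: "(x,y) \<in> H"
      then have "x \<in> P" "y \<in> K" if "x = 0" using memH P_def K_def that by auto
      moreover have "x \<in> P" using xy memH P_def by auto
      ultimately show "(x,y) \<in> Hs N m 0 0" using xy memH d True m by (auto simp: Hs_mem)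
    next
      fix x y assume "(x,y) \<in> Hs N m 0 0"
      then show "(x,y) \<in> H" using memH m by (auto simp: Hs_mem K_def)
    qed
    then show ?thesis using mpos mN True by (intro exI[of _ m] exI[of _ 0]) (auto simp: N_def)
  next
    case False
    then have dpos: "d > 0" using d by auto
    have "d \<in> P" using d by auto
    then obtain y0 where y0: "(d, y0) \<in> L" by (auto simp: P_def)
    define a where "a = y0 mod m"
    have "(0, m * (- (y0 div m))) \<in> L" using m by (auto simp: K_def)
    from Ladd[OF y0 this] have da: "(d, a) \<in> L"
      by (simp add: a_def minus_div_mult_eq_mod[symmetric] algebra_simps)
    have memL: "(x,y) \<in> L \<longleftrightarrow> d dvd x \<and> m dvd (y - (x div d) * a)" for x y
    proof
      assume xy: "(x,y) \<in> L"
      then have "x \<in> P" by (auto simp: P_def)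
      then obtain k where k: "x = d * k" using d by auto
      have "(- k * d, - k * a) \<in> L" using Lmult[OF da] by blast
      from Ladd[OF xy this] have "(0, y - k * a) \<in> L" using k by (simp add: algebra_simps)
      then have "m dvd (y - k * a)" using m by (auto simp: K_def)
      then show "d dvd x \<and> m dvd (y - (x div d) * a)" using k dpos by simp
    next
      assume r: "d dvd x \<and> m dvd (y - (x div d) * a)"
      then obtain k where k: "x = d * k" by auto
      have "(k * d, k * a) \<in> L" using Lmult[OF da] by blast
      moreover have "(0, y - k * a) \<in> L" using r k dpos m by (auto simp: K_def)
      ultimately have "(k * d + 0, k * a + (y - k * a)) \<in> L" by (rule Ladd)
      then show "(x,y) \<in> L" using k by (simp add: mult.commute)
    qed
    have "p \<in> H \<longleftrightarrow> p \<in> Hs N m d a" for p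
      by (cases p) (simp add: memH memL Hs_mem False)
    then have "H = Hs N m d a" by blast
    moreover have "0 \<le> a" "a < m" using mpos by (auto simp: a_def)
    ultimately show ?thesis using mpos mN d False by (intro exI[of _ m] exI[of _ d] exI[of _ a]) (auto simp: N_def)
  qed
qed



lemma open_enat_single: "open {enat k}"
proof (cases k)
  case 0
  have "{enat k} = {..< enat 1}"
    using 0 by (auto simp: enat_0[symmetric]) (case_tac x; simp)
  then show ?thesis by simp
next
  case (Suc j)
  have "{enat k} = {enat j <..< enat (Suc k)}"
    using Suc by auto (case_tac x; simp)
  then show ?thesis by simp
qed

lemma not_open_infty: "\<not> open {\<infinity>::enat}"
proof
  assume "open {\<infinity>::enat}"
  from open_left[OF this, of \<infinity> 0] obtain b where "b < \<infinity>" "{b<..\<infinity>} \<subseteq> {\<infinity>::enat}" by auto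
  then obtain k where "b = enat k" by (cases b) auto
  then have "enat (Suc k) \<in> {b<..\<infinity>}" by auto
  then show False using \<open>{b<..\<infinity>} \<subseteq> {\<infinity>}\<close> by auto
qed

lemma open_enat_eventually:
  assumes "\<infinity> \<in> S \<Longrightarrow> \<exists>N. \<forall>k\<ge>N. enat k \<in> S"
  shows "open (S :: enat set)"
proof (subst open_subopen, intro ballI)
  fix x assume x: "x \<in> S"
  show "\<exists>T. open T \<and> x \<in> T \<and> T \<subseteq> S"
  proof (cases x)
    case (enat k)
    then show ?thesis using x open_enat_single by (intro exI[of _ "{enat k}"]) auto
  next
    case infinity
    then obtain N where N: "\<forall>k\<ge>N. enat k \<in> S" using assms x by auto
    have "{enat N <..} \<subseteq> S"
    proof
      fix y assume "y \<in> {enat N <..}"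
      then show "y \<in> S" using N x infinity by (cases y) auto
    qed
    then show ?thesis using infinity by (intro exI[of _ "{enat N <..}"]) auto
  qed
qed



abbreviation XT :: "nat set \<Rightarrow> (enat \<times> nat) topology" where
  "XT I \<equiv> prod_topology (euclidean :: enat topology) (discrete_topology I)"

lemma openin_XT:
  assumes "\<And>j. j \<in> I \<Longrightarrow> Q (\<infinity>, j) \<Longrightarrow> \<exists>N. \<forall>k\<ge>N. Q (enat k, j)"
  shows "openin (XT I) {p \<in> UNIV \<times> I. Q p}"
proof -
  have eq: "{p \<in> UNIV \<times> I. Q p} = \<Union> ((\<lambda>j. {t. Q (t,j)} \<times> {j}) ` I)" by auto
  have "openin (XT I) ({t. Q (t,j)} \<times> {j})" if j: "j \<in> I" for j
  proof -
    have "open {t. Q (t,j)}" by (rule open_enat_eventually) (use assms j in auto)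
    then show ?thesis using j by (simp add: openin_prod_Times_iff open_openin[symmetric])
  qed
  then show ?thesis unfolding eq by (intro openin_Union) auto
qed

lemma cont_XT:
  fixes h :: "enat \<times> nat \<Rightarrow> 'b"
  assumes "\<And>j. j \<in> I \<Longrightarrow> \<exists>N. \<forall>k\<ge>N. h (enat k, j) = h (\<infinity>, j)"
  shows "continuous_map (XT I) (discrete_topology UNIV) h"
  unfolding continuous_map_def
proof (intro conjI allI impI)
  show "h \<in> topspace (XT I) \<rightarrow> topspace (discrete_topology UNIV)" by simp
  fix U :: "'b set" assume "openin (discrete_topology UNIV) U"
  have "openin (XT I) {p \<in> UNIV \<times> I. h p \<in> U}"
  proof (rule openin_XT)
    fix j assume j: "j \<in> I" "h (\<infinity>, j) \<in> U"
    obtain N where "\<forall>k\<ge>N. h (enat k, j) = h (\<infinity>, j)" using assms j by blast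
    then show "\<exists>N. \<forall>k\<ge>N. h (enat k, j) \<in> U" using j(2) by (intro exI[of _ N]) simp
  qed
  then show "openin (XT I) {x \<in> topspace (XT I). h x \<in> U}" by simp
qed

lemma derived_XT: "XT I derived_set_of topspace (XT I) = {\<infinity>} \<times> I"
proof -
  have *: "openin (XT I) {(t,j)} \<longleftrightarrow> t \<noteq> \<infinity>" if "j \<in> I" for t j
  proof -
    have "openin (XT I) {(t,j)} \<longleftrightarrow> open {t}"
      using that openin_prod_Times_iff[of euclidean "discrete_topology I" "{t}" "{j}"]
      by (simp add: open_openin[symmetric])
    also have "\<dots> \<longleftrightarrow> t \<noteq> \<infinity>" using open_enat_single not_open_infty by (cases t) auto
    finally show ?thesis .
  qed
  have "XT I derived_set_of topspace (XT I) = {x \<in> topspace (XT I). \<not> openin (XT I) {x}}"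
    by (rule derived_set_of_topspace)
  then show ?thesis using * by auto
qed

lemma compact_XT: "finite I \<Longrightarrow> compact_space (XT I)"
proof -
  assume "finite I"
  have "compact_space (euclidean :: enat topology)"
    using compact_UNIV by (simp add: compact_space_def)
  then show ?thesis using \<open>finite I\<close> by (simp add: compact_space_prod_topology compact_space_discrete_topology)
qed

lemma Hausdorff_pullback:
  assumes "Hausdorff_space T" "inj_on f A"
  shows "Hausdorff_space (pullback_topology A f T)"
  unfolding Hausdorff_space_def
proof (intro allI impI)
  fix x y assume xy: "x \<in> topspace (pullback_topology A f T) \<and> y \<in> topspace (pullback_topology A f T) \<and> x \<noteq> y"
  then have "x \<in> A" "y \<in> A" "f x \<in> topspace T" "f y \<in> topspace T" by (auto simp: topspace_pullback_topology)
  moreover have "f x \<noteq> f y" using xy assms(2) calculation by (auto dest: inj_onD)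
  ultimately obtain U V where UV: "openin T U" "openin T V" "f x \<in> U" "f y \<in> V" "disjnt U V"
    using assms(1) unfolding Hausdorff_space_def by blast
  show "\<exists>U V. openin (pullback_topology A f T) U \<and> openin (pullback_topology A f T) V \<and> x \<in> U \<and> y \<in> V \<and> disjnt U V"
    apply (rule exI[of _ "f -` U \<inter> A"], rule exI[of _ "f -` V \<inter> A"])
    using UV \<open>x \<in> A\<close> \<open>y \<in> A\<close> by (auto simp: openin_pullback_topology disjnt_def)
qed



lemma Hs_col: "d \<ge> 0 \<Longrightarrow> (0,y) \<in> Hs N m d a \<longleftrightarrow> 0 \<le> y \<and> y < N \<and> m dvd y"
  by (cases "d = 0") (simp_all add: Hs_mem)

lemma divisor_set_eq:
  fixes N m m' :: int
  assumes "N > 0" "m > 0" "m' > 0" "m dvd N" "m' dvd N"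
    and eq: "{y. 0 \<le> y \<and> y < N \<and> m dvd y} = {y. 0 \<le> y \<and> y < N \<and> m' dvd y}"
  shows "m = m'"
proof -
  have le: "m \<le> N" "m' \<le> N" using assms by (auto intro: zdvd_imp_le)
  have 1: "m' dvd m" if "m < N"
  proof -
    have "m \<in> {y. 0 \<le> y \<and> y < N \<and> m dvd y}" using that assms(2) by auto
    then have "m \<in> {y. 0 \<le> y \<and> y < N \<and> m' dvd y}" by (simp only: eq)
    then show ?thesis by simp
  qed
  have 2: "m dvd m'" if "m' < N"
  proof -
    have "m' \<in> {y. 0 \<le> y \<and> y < N \<and> m' dvd y}" using that assms(3) by auto
    then have "m' \<in> {y. 0 \<le> y \<and> y < N \<and> m dvd y}" by (simp only: eq)
    then show ?thesis by simp
  qed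
  show ?thesis
  proof (cases "m < N")
    case True
    show ?thesis
    proof (cases "m' < N")
      case True
      then have "m dvd m'" "m' dvd m" using 1 2 \<open>m < N\<close> by auto
      then show ?thesis using assms(2,3) zdvd_antisym_nonneg[of m m'] by linarith
    next
      case False
      then have "m' = N" using le by auto
      moreover have "m' \<le> m" using zdvd_imp_le[OF 1[OF True] assms(2)] .
      ultimately show ?thesis using True by linarith
    qed
  next
    case False
    then have "m = N" using le by auto
    show ?thesis
    proof (cases "m' < N")
      case True
      have "m \<le> m'" using zdvd_imp_le[OF 2[OF True] assms(3)] .
      then show ?thesis using True \<open>m = N\<close> by linarith
    next
      case False
      then show ?thesis using le \<open>m = N\<close> by auto
    qed
  qed
qed

lemma Hs_mem_da: "d > 0 \<Longrightarrow> 0 \<le> a \<Longrightarrow> a < m \<Longrightarrow> m \<le> N \<Longrightarrow> (d, a) \<in> Hs N m d a"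
  by (simp add: Hs_mem)

lemma Hs_dvd: "(x,y) \<in> Hs N m d a \<Longrightarrow> d dvd x"
  by (cases "d = 0") (simp_all add: Hs_mem)

lemma Hs_inj:
  fixes N m d a m' d' a' :: int
  assumes N: "N > 0" and m: "m > 0" "m dvd N" and m': "m' > 0" "m' dvd N"
    and d: "d \<ge> 0" "d' \<ge> 0" and a: "0 \<le> a" "a < m" "0 \<le> a'" "a' < m'"
    and z: "d = 0 \<longrightarrow> a = 0" "d' = 0 \<longrightarrow> a' = 0"
    and eq: "Hs N m d a = Hs N m' d' a'"
  shows "m = m' \<and> d = d' \<and> a = a'"
proof -
  have "{y. 0 \<le> y \<and> y < N \<and> m dvd y} = {y. (0,y) \<in> Hs N m d a}" using Hs_col[OF d(1)] by auto
  also have "\<dots> = {y. (0,y) \<in> Hs N m' d' a'}" using eq by simp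
  also have "\<dots> = {y. 0 \<le> y \<and> y < N \<and> m' dvd y}" using Hs_col[OF d(2)] by auto
  finally have mm: "m = m'" using divisor_set_eq N m m' by blast
  have mN: "m \<le> N" using m N by (auto intro: zdvd_imp_le)
  show ?thesis
  proof (cases "d = 0")
    case True
    have "d' = 0"
    proof (rule ccontr)
      assume "d' \<noteq> 0"
      then have "(d', a') \<in> Hs N m d a" using eq Hs_mem_da[of d' a' m' N] d a mm mN by auto
      then show False using True \<open>d' \<noteq> 0\<close> by (simp add: Hs_mem)
    qed
    then show ?thesis using True z mm by auto
  next
    case False
    have "d' \<noteq> 0"
    proof
      assume "d' = 0"
      then have "(d, a) \<in> Hs N m' d' a'" using eq Hs_mem_da[of d a m N] d a mN False by auto
      then show False using False \<open>d' = 0\<close> by (simp add: Hs_mem)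
    qed
    have "(d, a) \<in> Hs N m' d' a'" using eq Hs_mem_da[of d a m N] d a mN False by auto
    then have "d' dvd d" by (rule Hs_dvd)
    moreover have "(d', a') \<in> Hs N m d a" using eq Hs_mem_da[of d' a' m' N] d a mm mN \<open>d' \<noteq> 0\<close> by auto
    then have "d dvd d'" by (rule Hs_dvd)
    ultimately have dd: "d = d'" using d zdvd_antisym_nonneg[of d d'] by blast
    have "(d, a) \<in> Hs N m d a'" using \<open>(d, a) \<in> Hs N m' d' a'\<close> mm dd by simp
    then have "m dvd (a - a')" using False by (simp add: Hs_mem)
    then have "a mod m = a' mod m" by (simp add: mod_eq_dvd_iff)
    then have "a = a'" using a mm by simp
    then show ?thesis using mm dd by simp
  qed
qed

lemma Hs_conv:
  fixes x :: int
  assumes "d > 0" "\<bar>x\<bar> < d"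
  shows "(x,y) \<in> Hs N m d a \<longleftrightarrow> (x,y) \<in> Hs N m 0 0"
proof (cases "x = 0")
  case True
  then show ?thesis using assms by (simp add: Hs_mem)
next
  case False
  have "\<not> d dvd x"
  proof
    assume "d dvd x"
    then have "d dvd \<bar>x\<bar>" by simp
    then have "d \<le> \<bar>x\<bar>" using False by (auto intro: zdvd_imp_le)
    then show False using assms by simp
  qed
  then show ?thesis using False assms by (simp add: Hs_mem)
qed

lemma Hs_gen:
  assumes n: "n \<ge> 1" and m: "m > 0" "m dvd n"
  shows "{0::int} \<times> generate (integer_mod_group n) {int m mod int n} = Hs (int n) (int m) 0 0"
proof -
  have c: "int m mod int n \<in> carrier (integer_mod_group n)" using n by (simp add: carrier_integer_mod_group)
  have mdN: "int m dvd int n" using m by simp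
  have "generate (integer_mod_group n) {int m mod int n} = {k * (int m mod int n) mod int n | k. k \<in> UNIV}"
    using group.generate_pow[OF group_integer_mod_group c] by (simp add: int_pow_integer_mod_group)
  also have "\<dots> = {y. 0 \<le> y \<and> y < int n \<and> int m dvd y}"
  proof safe
    fix k :: int
    show "0 \<le> k * (int m mod int n) mod int n" "k * (int m mod int n) mod int n < int n" using n by auto
    have "int m dvd int m mod int n" using mdN by (simp add: dvd_mod_iff)
    then show "int m dvd k * (int m mod int n) mod int n" using mdN by (simp add: dvd_mod_iff)
  next
    fix y :: int assume y: "0 \<le> y" "y < int n" "int m dvd y"
    then obtain q where q: "y = int m * q" by auto
    have "q * (int m mod int n) mod int n = (q * int m) mod int n" by (simp add: mod_mult_right_eq)
    also have "\<dots> = y" using q y by (simp add: mult.commute)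
    finally show "\<exists>k. y = k * (int m mod int n) mod int n \<and> k \<in> UNIV" by (intro exI[of _ q]) simp
  qed
  finally show ?thesis by (auto simp: Hs_def)
qed


lemma enat_sub_div_mod:
  fixes m :: nat and d a :: int
  assumes "m > 0" "d > 0" "0 \<le> a" "a < int m"
  shows "(nat ((d - 1) * int m + a)) div m = nat (d - 1) \<and> (nat ((d - 1) * int m + a)) mod m = nat a"
proof -
  have e: "nat ((d - 1) * int m + a) = nat (d - 1) * m + nat a" using assms by (simp add: nat_add_distrib nat_mult_distrib)
  show ?thesis unfolding e using assms by auto
qed

theorem corollary1:
  fixes n :: nat
  assumes "n \<ge> 1"
  shows "chabauty_topology (Z_times_Zn n) homeomorphic_space
           prod_topology (euclidean :: enat topology) (discrete_topology {1..num_divisors n})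
       \<and> chabauty_topology (Z_times_Zn n) derived_set_of topspace (chabauty_topology (Z_times_Zn n))
           = {{0::int} \<times> generate (integer_mod_group n) {int m mod int n} | m. m > 0 \<and> m dvd n}"
proof -
  define N where "N = int n"
  have Npos: "N > 0" using assms by (simp add: N_def)
  define D where "D = {m::nat. m dvd n}"
  define I where "I = {1..num_divisors n}"
  have finD: "finite D" using assms by (simp add: D_def finite_divisors_nat)
  obtain \<sigma> where \<sigma>: "bij_betw \<sigma> I D"
    using ex_bij_betw_nat_finite_1[OF finD] by (auto simp: I_def num_divisors_def D_def)
  have \<sigma>D1: "\<sigma> j dvd n" if "j \<in> I" for j
    using bij_betwE[OF \<sigma>] that by (auto simp: D_def)
  have \<sigma>D2: "\<sigma> j > 0" if "j \<in> I" for j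
    using \<sigma>D1[OF that] assms by (cases "\<sigma> j = 0") auto
  note \<sigma>D = \<sigma>D1 \<sigma>D2
  define G where "G = Z_times_Zn n"
  define e where "e = (\<lambda>H. \<lambda>g\<in>carrier G. g \<in> H)"
  define Fm where "Fm = (\<lambda>m t. case t of \<infinity> \<Rightarrow> Hs N (int m) 0 0
                         | enat k \<Rightarrow> Hs N (int m) (int (k div m) + 1) (int (k mod m)))"
  define F where "F = (\<lambda>(t, j). Fm (\<sigma> j) t)"
  let ?C = "chabauty_topology G"
  let ?P = "product_topology (\<lambda>_. discrete_topology (UNIV :: bool set)) (carrier G)"
  have Cdef: "?C = pullback_topology {H. subgroup H G} e ?P"
    by (simp add: chabauty_topology_def e_def)
  have topC: "topspace ?C = {H. subgroup H G}"
    by (auto simp: Cdef topspace_pullback_topology e_def)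
  have topX: "topspace (XT I) = UNIV \<times> I" by simp
  have Fsub: "subgroup (F p) G" if p_in: "p \<in> UNIV \<times> I" for p
  proof -
    obtain t j where p: "p = (t,j)" "j \<in> I" using p_in by (cases p) auto
    have pos: "int (\<sigma> j) > 0" and dv: "int (\<sigma> j) dvd int n" using \<sigma>D[OF p(2)] by auto
    show ?thesis
    proof (cases t)
      case (enat k)
      have "F p = Hs (int n) (int (\<sigma> j)) (int (k div \<sigma> j) + 1) (int (k mod \<sigma> j))"
        by (simp add: p enat F_def Fm_def N_def)
      moreover have "subgroup (Hs (int n) (int (\<sigma> j)) (int (k div \<sigma> j) + 1) (int (k mod \<sigma> j))) G"
        unfolding G_def by (rule Hs_subgroup[OF assms pos dv]) simp
      ultimately show ?thesis by simp
    next
      case infinity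
      have "F p = Hs (int n) (int (\<sigma> j)) 0 0"
        by (simp add: p infinity F_def Fm_def N_def)
      moreover have "subgroup (Hs (int n) (int (\<sigma> j)) 0 0) G"
        unfolding G_def by (rule Hs_subgroup[OF assms pos dv]) simp
      ultimately show ?thesis by simp
    qed
  qed
  have Fsurj: "H \<in> F ` (UNIV \<times> I)" if H: "subgroup H G" for H
  proof -
    obtain m d a where mda: "m > 0" "m dvd int n" "d \<ge> 0" "0 \<le> a" "a < m" "d = 0 \<longrightarrow> a = 0"
      "H = Hs (int n) m d a" using classify[OF assms H[unfolded G_def]] by blast
    define m' where "m' = nat m"
    have m'1: "m = int m'" using mda by (simp add: m'_def)
    have m'2: "m' > 0" using mda by (simp add: m'_def)
    have "int m' dvd int n" using mda m'1 by simp
    then have m'3: "m' \<in> D" by (simp add: D_def)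
    note m' = m'1 m'2 m'3
    have "m' \<in> \<sigma> ` I" using \<sigma> m'3 by (simp add: bij_betw_def)
    then obtain j where j: "j \<in> I" "\<sigma> j = m'" by blast
    show ?thesis
    proof (cases "d = 0")
      case True
      have "H = F (\<infinity>, j)" using mda True m' j by (simp add: F_def Fm_def N_def)
      then show ?thesis using j by auto
    next
      case False
      define k where "k = nat ((d - 1) * int m' + a)"
      have "k div m' = nat (d - 1)" "k mod m' = nat a"
        using enat_sub_div_mod[of m' d a] m' mda False unfolding k_def by auto
      moreover have "int (nat (d - 1)) + 1 = d" "int (nat a) = a" using mda False by auto
      ultimately have "H = F (enat k, j)" using mda False m' j by (simp add: F_def Fm_def N_def)
      then show ?thesis using j by auto
    qed
  qed
  have Fimg: "F ` topspace (XT I) = topspace ?C"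
  proof
    show "F ` topspace (XT I) \<subseteq> topspace ?C" using Fsub by (auto simp: topC)
    show "topspace ?C \<subseteq> F ` topspace (XT I)" using Fsurj by (auto simp: topC)
  qed
  have Finj: "inj_on F (topspace (XT I))"
  proof (rule inj_onI)
    fix p q assume p: "p \<in> topspace (XT I)" and q: "q \<in> topspace (XT I)" and eq: "F p = F q"
    obtain t j where tj: "p = (t,j)" "j \<in> I" using p by (cases p) auto
    obtain t' j' where tj': "q = (t',j')" "j' \<in> I" using q by (cases q) auto
    have params: "\<exists>d a. d \<ge> 0 \<and> 0 \<le> a \<and> a < int (\<sigma> j) \<and> (d = 0 \<longrightarrow> a = 0) \<and> F (t,j) = Hs N (int (\<sigma> j)) d a
        \<and> (t = \<infinity> \<longleftrightarrow> d = 0) \<and> (\<forall>k. t = enat k \<longrightarrow> d = int (k div \<sigma> j) + 1 \<and> a = int (k mod \<sigma> j))"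
      if "j \<in> I" for t j
    proof (cases t)
      case (enat k)
      show ?thesis
        apply (rule exI[of _ "int (k div \<sigma> j) + 1"], rule exI[of _ "int (k mod \<sigma> j)"])
        using \<sigma>D2[OF that] enat by (simp add: F_def Fm_def)
    next
      case infinity
      show ?thesis
        apply (rule exI[of _ 0], rule exI[of _ 0])
        using infinity \<sigma>D2[OF that] by (simp add: F_def Fm_def)
    qed
    obtain d a where da: "d \<ge> 0" "0 \<le> a" "a < int (\<sigma> j)" "d = 0 \<longrightarrow> a = 0" "F (t,j) = Hs N (int (\<sigma> j)) d a"
        "t = \<infinity> \<longleftrightarrow> d = 0" "\<forall>k. t = enat k \<longrightarrow> d = int (k div \<sigma> j) + 1 \<and> a = int (k mod \<sigma> j)"
      using params[where t = t and j = j, OF tj(2)] by (elim exE conjE) (rule that; assumption)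
    obtain d' a' where da': "d' \<ge> 0" "0 \<le> a'" "a' < int (\<sigma> j')" "d' = 0 \<longrightarrow> a' = 0" "F (t',j') = Hs N (int (\<sigma> j')) d' a'"
        "t' = \<infinity> \<longleftrightarrow> d' = 0" "\<forall>k. t' = enat k \<longrightarrow> d' = int (k div \<sigma> j') + 1 \<and> a' = int (k mod \<sigma> j')"
      using params[where t = t' and j = j', OF tj'(2)] by (elim exE conjE) (rule that; assumption)
    have "int (\<sigma> j) = int (\<sigma> j') \<and> d = d' \<and> a = a'"
      apply (rule Hs_inj[OF Npos _ _ _ _ da(1) da'(1) da(2,3) da'(2,3) da(4) da'(4)])
      using \<sigma>D[OF tj(2)] \<sigma>D[OF tj'(2)] eq tj tj' da(5) da'(5) by (auto simp: N_def)
    then have sj: "\<sigma> j = \<sigma> j'" and dd: "d = d'" and aa: "a = a'" by auto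
    have jj: "j = j'" using sj tj(2) tj'(2) \<sigma> by (auto simp: bij_betw_def dest: inj_onD)
    have tt: "t = t'"
    proof (cases t)
      case (enat k)
      then obtain k' where k': "t' = enat k'" using da(6) da'(6) dd by (cases t') auto
      have "k div \<sigma> j = k' div \<sigma> j" "k mod \<sigma> j = k' mod \<sigma> j"
        using da(7) da'(7) enat k' dd aa sj by auto
      then have "k = k'" by (metis div_mod_decomp)
      then show ?thesis using enat k' by simp
    next
      case infinity
      then show ?thesis using da(6) da'(6) dd by auto
    qed
    show "p = q" using tj tj' jj tt by simp
  qed
  have Fcont: "continuous_map (XT I) ?C F"
    unfolding Cdef
  proof (rule continuous_map_pullback')
    show "topspace (XT I) \<subseteq> F -` {H. subgroup H G}" using Fsub by auto
    show "continuous_map (XT I) ?P (e \<circ> F)"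
      unfolding continuous_map_componentwise
    proof (intro conjI ballI)
      show "(e \<circ> F) ` topspace (XT I) \<subseteq> extensional (carrier G)" by (auto simp: e_def)
      fix g assume g: "g \<in> carrier G"
      obtain x y where xy: "g = (x,y)" by force
      have "continuous_map (XT I) (discrete_topology UNIV) (\<lambda>p. g \<in> F p)"
      proof (rule cont_XT)
        fix j assume j: "j \<in> I"
        have "\<forall>k\<ge>nat \<bar>x\<bar> * \<sigma> j. (g \<in> F (enat k, j)) = (g \<in> F (\<infinity>, j))"
        proof (intro allI impI)
          fix k assume k: "k \<ge> nat \<bar>x\<bar> * \<sigma> j"
          have "(nat \<bar>x\<bar> * \<sigma> j) div \<sigma> j \<le> k div \<sigma> j" by (rule div_le_mono[OF k])
          then have "nat \<bar>x\<bar> \<le> k div \<sigma> j" using \<sigma>D2[OF j] by simp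
          then have "\<bar>x\<bar> \<le> int (k div \<sigma> j)" by simp
          then have lt: "\<bar>x\<bar> < int (k div \<sigma> j) + 1" by linarith
          have "(x,y) \<in> Hs N (int (\<sigma> j)) (int (k div \<sigma> j) + 1) (int (k mod \<sigma> j)) \<longleftrightarrow> (x,y) \<in> Hs N (int (\<sigma> j)) 0 0"
            by (rule Hs_conv) (use lt in auto)
          then show "(g \<in> F (enat k, j)) = (g \<in> F (\<infinity>, j))"
            using xy by (simp add: F_def Fm_def)
        qed
        then show "\<exists>N. \<forall>k\<ge>N. (g \<in> F (enat k, j)) = (g \<in> F (\<infinity>, j))" by blast
      qed
      then show "continuous_map (XT I) (discrete_topology UNIV) (\<lambda>p. (e \<circ> F) p g)"
        using g by (simp add: e_def o_def)
    qed
  qed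
  have HC: "Hausdorff_space ?C"
    unfolding Cdef
  proof (rule Hausdorff_pullback)
    show "Hausdorff_space ?P" by (simp add: Hausdorff_space_product_topology)
    show "inj_on e {H. subgroup H G}"
    proof (rule inj_onI)
      fix H H' assume H: "H \<in> {H. subgroup H G}" and H': "H' \<in> {H. subgroup H G}" and eq: "e H = e H'"
      have "H \<subseteq> carrier G" "H' \<subseteq> carrier G" using H H' subgroup.subset by auto
      moreover have "g \<in> H \<longleftrightarrow> g \<in> H'" if "g \<in> carrier G" for g
        using fun_cong[OF eq, of g] that by (simp add: e_def)
      ultimately show "H = H'" by blast
    qed
  qed
  have finI: "finite I" by (simp add: I_def)
  have hom: "homeomorphic_map (XT I) ?C F"
    by (rule continuous_imp_homeomorphic_map[OF Fcont compact_XT[OF finI] HC Fimg Finj])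
  have part1: "?C homeomorphic_space XT I"
    using homeomorphic_map_imp_homeomorphic_space[OF hom] homeomorphic_space_sym by blast
  have "?C derived_set_of topspace ?C = F ` (XT I derived_set_of topspace (XT I))"
    using homeomorphic_map_derived_set_of[OF hom subset_refl, unfolded Fimg] .
  also have "\<dots> = F ` ({\<infinity>} \<times> I)" by (simp only: derived_XT)
  also have "\<dots> = (\<lambda>m. Hs N (int m) 0 0) ` D"
  proof -
    have "{\<infinity>} \<times> I = (\<lambda>j. (\<infinity>, j)) ` I" by auto
    then have "F ` ({\<infinity>} \<times> I) = (\<lambda>j. F (\<infinity>, j)) ` I" by (subst \<open>{\<infinity>} \<times> I = (\<lambda>j. (\<infinity>, j)) ` I\<close>) (rule image_image)
    also have "\<dots> = (\<lambda>m. Hs N (int m) 0 0) ` (\<sigma> ` I)" by (simp add: F_def Fm_def image_image)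
    also have "\<sigma> ` I = D" using \<sigma> by (simp add: bij_betw_def)
    finally show ?thesis .
  qed
  also have "\<dots> = {{0::int} \<times> generate (integer_mod_group n) {int m mod int n} | m. m > 0 \<and> m dvd n}"
  proof -
    have "m \<in> D \<Longrightarrow> m > 0" for m using assms by (cases "m = 0") (auto simp: D_def)
    then show ?thesis using Hs_gen[OF assms] by (auto simp: D_def N_def)
  qed
  finally have fin: "?C derived_set_of topspace ?C = {{0::int} \<times> generate (integer_mod_group n) {int m mod int n} | m. m > 0 \<and> m dvd n}" .
  show ?thesis using part1 fin unfolding G_def I_def by blast
qed



end
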